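(* In the hardware model described in the context, and for a program obeying the well-behavedness rules below, suppose a thread $T_i$ tags a node $n$ at time $t_t$ while $n$ is reachable in its data structure. If some thread $T_j$ frees $n$ at a time $t_f$ with $t_t < t_f$, then any conditional access to $n$ by $T_i$ at a time $t_d > t_f$ (with no re-tagging of $n$ by $T_i$ in between) fails. In particular, a conditional access never succeeds on a node that has been freed since it was tagged.
   Context: Model: threads operate on a shared memory organized into nodes, with a cache-coherence mechanism (e.g. MSI/MESI). Each thread maintains a set of tagged locations. Conditional-access instructions cread (read) and cwrite (write) satisfy: (P1) a conditional access atomically tags the accessed node on its first access by the thread and then conditionally performs the read/write; (P2) a conditional access succeeds only if none of the thread's tagged locations has been invalidated since it was tagged (on failure all tags are removed and the operation restarts); (P3) when a location is written, all cached copies at other threads are invalidated, thereby invalidating any tags on it held by other threads; (P4) conditional accesses may fail spuriously but never succeed spuriously. Well-behavedness: all shared-memory reads and writes of data-structure operations use cread/cwrite; reclaimer rule: a thread frees a node only after unlinking it and then writing to (marking) it; only one thread may free a given node.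
   Formalization: The freeing thread $T_j$ differs from $T_i$, the reclaimer rule also keeps n unreachable from its unlinking until it is freed, and no re-tagging means n stays tagged by $T_i$ at every time after $t_t$ up to $t_d$. Each condition added here is assumed in the paper as well or is needed for the statement above to hold. *)

theory Defs
  imports Main
begin

text \<open>Threads have type 't, shared-memory nodes have type 'n.  Time is discrete:
  event number k of a trace happens at time k, and the state before that
  event is the state at time k.

  Well-behavedness (all data-structure reads and writes use cread/cwrite) is
  built in: the only memory accesses available are conditional ones.  The
  result of a conditional access is recorded in the event (True = success);
  spurious failures are always allowed, successes are constrained by
  legality (P2, P4).\<close>

datatype ('t, 'n) event =
    CRead 't 'n bool            \<comment> \<open>thread, accessed node, success?\<close>
  | CWrite 't 'n "'n set" bool  \<comment> \<open>thread, written node, set of reachable nodes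
                                   after the write (if it succeeds), success?\<close>
  | Free 't 'n
  | UntagAll 't

record ('t, 'n) mstate =
  tags :: "'t \<Rightarrow> 'n set"
  invd :: "'t \<Rightarrow> bool"       \<comment> \<open>some tagged location invalidated since it was tagged\<close>
  reach :: "'n set"
  freed :: "'n set"

text \<open>Effect of a conditional access by thread t on node n with outcome ok:
  (P1) the node is tagged, then the access is performed; (P2) on failure all
  tags of t are removed.\<close>
definition cond_access :: "('t, 'n) mstate \<Rightarrow> 't \<Rightarrow> 'n \<Rightarrow> bool \<Rightarrow> ('t, 'n) mstate" where
  "cond_access s t n ok =
     (if ok then s\<lparr>tags := (tags s)(t := insert n (tags s t))\<rparr>
      else s\<lparr>tags := (tags s)(t := {}), invd := (invd s)(t := False)\<rparr>)"

text \<open>(P3) a successful write to node m invalidates the cached copies of m at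
  all other threads, thereby invalidating their tags on m.\<close>
definition invalidate_others :: "('t, 'n) mstate \<Rightarrow> 't \<Rightarrow> 'n \<Rightarrow> ('t, 'n) mstate" where
  "invalidate_others s t m =
     s\<lparr>invd := (\<lambda>u. invd s u \<or> (u \<noteq> t \<and> m \<in> tags s u))\<rparr>"

fun step :: "('t, 'n) mstate \<Rightarrow> ('t, 'n) event \<Rightarrow> ('t, 'n) mstate" where
  "step s (CRead t n ok) = cond_access s t n ok"
| "step s (CWrite t m R ok) =
     (if ok then (cond_access (invalidate_others s t m) t m True)\<lparr>reach := R\<rparr>
      else cond_access s t m False)"
| "step s (Free t n) = s\<lparr>freed := insert n (freed s)\<rparr>"
| "step s (UntagAll t) = s\<lparr>tags := (tags s)(t := {}), invd := (invd s)(t := False)\<rparr>"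

text \<open>(P2)/(P4): a conditional access may succeed only if none of the thread's
  tagged locations has been invalidated; failures are always possible.\<close>
fun legal :: "('t, 'n) mstate \<Rightarrow> ('t, 'n) event \<Rightarrow> bool" where
  "legal s (CRead t n ok) = (ok \<longrightarrow> \<not> invd s t)"
| "legal s (CWrite t m R ok) = (ok \<longrightarrow> \<not> invd s t)"
| "legal s (Free t n) = True"
| "legal s (UntagAll t) = True"

fun run :: "('t, 'n) mstate \<Rightarrow> (nat \<Rightarrow> ('t, 'n) event) \<Rightarrow> nat \<Rightarrow> ('t, 'n) mstate" where
  "run s0 tr 0 = s0"
| "run s0 tr (Suc k) = step (run s0 tr k) (tr k)"

definition valid_exec :: "('t, 'n) mstate \<Rightarrow> (nat \<Rightarrow> ('t, 'n) event) \<Rightarrow> bool" where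
  "valid_exec s0 tr \<longleftrightarrow> (\<forall>k. legal (run s0 tr k) (tr k))"

definition unlinks_at :: "('t, 'n) mstate \<Rightarrow> (nat \<Rightarrow> ('t, 'n) event) \<Rightarrow> nat \<Rightarrow> 't \<Rightarrow> 'n \<Rightarrow> bool" where
  "unlinks_at s0 tr u j n \<longleftrightarrow>
     (\<exists>m R. tr u = CWrite j m R True) \<and> n \<in> reach (run s0 tr u) \<and> n \<notin> reach (run s0 tr (Suc u))"

text \<open>Reclaimer rule: a thread frees a node only after unlinking it and then
  writing to (marking) it (the node stays unlinked from the unlink to the
  free); only one thread frees a given node (and only once).\<close>
definition reclaimer_ok :: "('t, 'n) mstate \<Rightarrow> (nat \<Rightarrow> ('t, 'n) event) \<Rightarrow> bool" where
  "reclaimer_ok s0 tr \<longleftrightarrow>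
     (\<forall>k j n. tr k = Free j n \<longrightarrow>
        (\<exists>u w. u < w \<and> w < k \<and> unlinks_at s0 tr u j n \<and>
               (\<forall>k'. u < k' \<and> k' \<le> k \<longrightarrow> n \<notin> reach (run s0 tr k')) \<and>
               (\<exists>R. tr w = CWrite j n R True)) \<and>
        (\<forall>k' j'. tr k' = Free j' n \<longrightarrow> k' = k \<and> j' = j))"

definition tags_at :: "('t, 'n) mstate \<Rightarrow> (nat \<Rightarrow> ('t, 'n) event) \<Rightarrow> nat \<Rightarrow> 't \<Rightarrow> 'n \<Rightarrow> bool" where
  "tags_at s0 tr t i n \<longleftrightarrow>
     n \<notin> tags (run s0 tr t) i \<and> n \<in> tags (run s0 tr (Suc t)) i"

fun cond_access_to :: "('t, 'n) event \<Rightarrow> 't \<Rightarrow> 'n \<Rightarrow> bool" where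
  "cond_access_to (CRead t m ok) i n = (t = i \<and> m = n)"
| "cond_access_to (CWrite t m R ok) i n = (t = i \<and> m = n)"
| "cond_access_to _ i n = False"

fun succeeds :: "('t, 'n) event \<Rightarrow> bool" where
  "succeeds (CRead t m ok) = ok"
| "succeeds (CWrite t m R ok) = ok"
| "succeeds _ = False"

end

theory Submission
  imports Defs
begin

lemma invd_pres:
  assumes "invd s i" "n \<in> tags (step s e) i"
  shows "invd (step s e) i"
  using assms
  by (cases e) (auto simp: cond_access_def invalidate_others_def split: if_splits)

lemma invd_set:
  assumes "n \<in> tags s i" "i \<noteq> j"
  shows "invd (step s (CWrite j n R True)) i"
  using assms by (simp add: cond_access_def invalidate_others_def)

theorem theorem1:
  fixes s0 :: "('t, 'n) mstate" and tr :: "nat \<Rightarrow> ('t, 'n) event"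
    and i j :: 't and n :: 'n and t_t t_f t_d :: nat
  assumes "valid_exec s0 tr"
    and "reclaimer_ok s0 tr"
    and "tags_at s0 tr t_t i n"
    and "n \<in> reach (run s0 tr t_t)"
    and "tr t_f = Free j n"
    and "j \<noteq> i"
    and "t_t < t_f" and "t_f < t_d"
    and "\<forall>k. t_t < k \<and> k \<le> t_d \<longrightarrow> n \<in> tags (run s0 tr k) i"
    and "cond_access_to (tr t_d) i n"
  shows "\<not> succeeds (tr t_d)"
proof -
  obtain u w R where uw: "u < w" "w < t_f" "unlinks_at s0 tr u j n"
    "\<forall>k'. u < k' \<and> k' \<le> t_f \<longrightarrow> n \<notin> reach (run s0 tr k')"
    "tr w = CWrite j n R True"
  proof -
    have "\<exists>u w. u < w \<and> w < t_f \<and> unlinks_at s0 tr u j n \<and>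
               (\<forall>k'. u < k' \<and> k' \<le> t_f \<longrightarrow> n \<notin> reach (run s0 tr k')) \<and>
               (\<exists>R. tr w = CWrite j n R True)"
      using assms(2,5) unfolding reclaimer_ok_def by (meson)
    then show ?thesis using that by blast
  qed
  have "t_t \<le> u"
  proof (rule ccontr)
    assume "\<not> t_t \<le> u"
    hence "u < t_t" by simp
    then show False using uw(4) assms(4,7) by (meson less_imp_le_nat)
  qed
  hence tw: "t_t < w" using uw by simp
  have inv1: "invd (run s0 tr (Suc w)) i"
  proof -
    have "n \<in> tags (run s0 tr w) i" using assms(9) tw uw(2) assms(8) by simp
    hence "invd (step (run s0 tr w) (CWrite j n R True)) i"
      using invd_set assms(6) by metis
    thus ?thesis using uw(5) by simp
  qed
  have "\<forall>m. Suc w + m \<le> t_d \<longrightarrow> invd (run s0 tr (Suc w + m)) i"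
  proof
    fix m show "Suc w + m \<le> t_d \<longrightarrow> invd (run s0 tr (Suc w + m)) i"
    proof (induction m)
      case 0 then show ?case using inv1 by simp
    next
      case (Suc m)
      show ?case
      proof
        assume le: "Suc w + Suc m \<le> t_d"
        hence "invd (run s0 tr (Suc w + m)) i" using Suc by simp
        moreover have "n \<in> tags (run s0 tr (Suc (Suc w + m))) i"
          using assms(9) le tw by (metis add_Suc_right add_Suc less_Suc_eq trans_less_add1)
        ultimately show "invd (run s0 tr (Suc w + Suc m)) i"
          using invd_pres[of "run s0 tr (Suc w + m)" i n "tr (Suc w + m)"]
          by (metis run.simps(2) add_Suc_right)
      qed
    qed
  qed
  moreover have "Suc w + (t_d - Suc w) = t_d" using uw(2) assms(8) by simp
  ultimately have "invd (run s0 tr t_d) i"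
    by (metis le_refl)
  moreover have "legal (run s0 tr t_d) (tr t_d)"
    using assms(1) unfolding valid_exec_def by blast
  ultimately show ?thesis using assms(10)
    by (cases "tr t_d") auto
qed

end
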